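(* Let $H$ be a simple $3$-connected graph and $\mathcal{F}$ an arbitrary family of injective maps from $X=\{a,b,c,d\}$ to $V(H)$. Let $G$ be a $2$-connected graph with $X\subseteq V(G)$ and a $2$-separation $(A,B)$ with $A\cap B=\{u,v\}$, and let $G_A=G[A]\cup\{uv\}$ (with any resulting parallel edge removed). If $X\subseteq A$, then $G$ has an $H(X)$-minor if and only if $G_A$ has an $H(X)$-minor.
   Context: A $2$-separation is a pair $(A,B)$ with $A\cup B=V(G)$, $|A\cap B|\le2$ and no edge between $A\setminus B$ and $B\setminus A$. An $H$-model in $G$ is a family $\{G_x:x\in V(H)\}$ of pairwise vertex-disjoint connected subgraphs of $G$ such that for every edge $xy\in E(H)$ some vertex of $G_x$ is adjacent in $G$ to some vertex of $G_y$. For injective $\pi:X\to V(H)$, $G$ has an $H(X)$-minor with respect to $\pi$ if there is an $H$-model with $w\in V(G_{\pi(w)})$ for all $w\in X$; $G$ has an $H(X)$-minor (with respect to $\mathcal{F}$) if this holds for some $\pi\in\mathcal{F}$. *)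

theory Defs
  imports Main
begin

definition graph :: "'a set \<Rightarrow> ('a \<Rightarrow> 'a \<Rightarrow> bool) \<Rightarrow> bool" where
  "graph V E \<longleftrightarrow> finite V \<and> (\<forall>x y. E x y \<longrightarrow> x \<in> V \<and> y \<in> V \<and> x \<noteq> y \<and> E y x)"

definition connected_set :: "'a set \<Rightarrow> ('a \<Rightarrow> 'a \<Rightarrow> bool) \<Rightarrow> 'a set \<Rightarrow> bool" where
  "connected_set V E S \<longleftrightarrow> S \<noteq> {} \<and> S \<subseteq> V \<and>
     (\<forall>x\<in>S. \<forall>y\<in>S. (\<lambda>p q. E p q \<and> p \<in> S \<and> q \<in> S)\<^sup>*\<^sup>* x y)"

definition k_connected :: "nat \<Rightarrow> 'a set \<Rightarrow> ('a \<Rightarrow> 'a \<Rightarrow> bool) \<Rightarrow> bool" where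
  "k_connected k V E \<longleftrightarrow> card V > k \<and>
     (\<forall>S \<subseteq> V. card S < k \<longrightarrow> connected_set V E (V - S))"

definition two_separation :: "'a set \<Rightarrow> ('a \<Rightarrow> 'a \<Rightarrow> bool) \<Rightarrow> 'a set \<Rightarrow> 'a set \<Rightarrow> bool" where
  "two_separation V E A B \<longleftrightarrow> A \<union> B = V \<and> card (A \<inter> B) \<le> 2 \<and>
     A - B \<noteq> {} \<and> B - A \<noteq> {} \<and>
     (\<forall>x\<in>A - B. \<forall>y\<in>B - A. \<not> E x y)"

text \<open>An H-model in G, given by its branch sets \<open>M x\<close> (vertex sets of the
connected subgraphs G_x; a connected subgraph may be replaced by the subgraph
induced on its vertex set).\<close>
definition H_model :: "'b set \<Rightarrow> ('b \<Rightarrow> 'b \<Rightarrow> bool) \<Rightarrow> 'a set \<Rightarrow> ('a \<Rightarrow> 'a \<Rightarrow> bool)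
    \<Rightarrow> ('b \<Rightarrow> 'a set) \<Rightarrow> bool" where
  "H_model VH EH VG EG M \<longleftrightarrow>
     (\<forall>x\<in>VH. connected_set VG EG (M x)) \<and>
     (\<forall>x\<in>VH. \<forall>y\<in>VH. x \<noteq> y \<longrightarrow> M x \<inter> M y = {}) \<and>
     (\<forall>x\<in>VH. \<forall>y\<in>VH. EH x y \<longrightarrow> (\<exists>p\<in>M x. \<exists>q\<in>M y. EG p q))"

definition rooted_minor_wrt :: "'b set \<Rightarrow> ('b \<Rightarrow> 'b \<Rightarrow> bool) \<Rightarrow> 'a set \<Rightarrow> ('a \<Rightarrow> 'b)
    \<Rightarrow> 'a set \<Rightarrow> ('a \<Rightarrow> 'a \<Rightarrow> bool) \<Rightarrow> bool" where
  "rooted_minor_wrt VH EH X \<pi> VG EG \<longleftrightarrow>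
     (\<exists>M. H_model VH EH VG EG M \<and> (\<forall>w\<in>X. w \<in> M (\<pi> w)))"

definition rooted_minor :: "'b set \<Rightarrow> ('b \<Rightarrow> 'b \<Rightarrow> bool) \<Rightarrow> 'a set \<Rightarrow> ('a \<Rightarrow> 'b) set
    \<Rightarrow> 'a set \<Rightarrow> ('a \<Rightarrow> 'a \<Rightarrow> bool) \<Rightarrow> bool" where
  "rooted_minor VH EH X F VG EG \<longleftrightarrow> (\<exists>\<pi>\<in>F. rooted_minor_wrt VH EH X \<pi> VG EG)"

definition side_graph :: "('a \<Rightarrow> 'a \<Rightarrow> bool) \<Rightarrow> 'a set \<Rightarrow> 'a \<Rightarrow> 'a \<Rightarrow> 'a \<Rightarrow> 'a \<Rightarrow> bool" where
  "side_graph E A u v = (\<lambda>x y. (E x y \<and> x \<in> A \<and> y \<in> A) \<or>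
      (u \<noteq> v \<and> ((x = u \<and> y = v) \<or> (x = v \<and> y = u))))"

end

theory Submission
  imports Defs
begin

lemma rtranclp_lift:
  assumes "R\<^sup>*\<^sup>* x y" "\<And>s t. R s t \<Longrightarrow> S\<^sup>*\<^sup>* s t"
  shows "S\<^sup>*\<^sup>* x y"
  using assms(1) by induction (auto intro: rtranclp_trans assms(2))

lemma rtranclp_sym:
  assumes "R\<^sup>*\<^sup>* x y" "\<And>s t. R s t \<Longrightarrow> R t s"
  shows "R\<^sup>*\<^sup>* y x"
  using assms(1)
proof induction
  case base then show ?case by simp
next
  case (step y z)
  then show ?case using assms(2) by (meson converse_rtranclp_into_rtranclp)
qed

lemma graph_sym: "graph V E \<Longrightarrow> E x y \<Longrightarrow> E y x"
  unfolding graph_def by blast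

lemma graph_in: "graph V E \<Longrightarrow> E x y \<Longrightarrow> x \<in> V \<and> y \<in> V \<and> x \<noteq> y"
  unfolding graph_def by blast

lemma sep_step:
  assumes "graph V E" "two_separation V E A B" "y \<in> B - A" "E y y'" "y' \<in> A"
  shows "y' \<in> A \<inter> B"
proof (rule ccontr)
  assume "y' \<notin> A \<inter> B"
  then have "y' \<in> A - B" using assms(5) by blast
  moreover have "E y' y" using graph_sym[OF assms(1) assms(4)] .
  ultimately show False using assms(2,3) unfolding two_separation_def by blast
qed

lemma stay_side:
  assumes "graph V E" "two_separation V E A B" "connected_set V E K"
    "K \<inter> (A \<inter> B) = {}" "q \<in> K" "q \<in> B - A"
  shows "K \<subseteq> B - A"
proof
  fix r assume r: "r \<in> K"
  have path: "(\<lambda>p q. E p q \<and> p \<in> K \<and> q \<in> K)\<^sup>*\<^sup>* q r"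
    using assms(3,5) r unfolding connected_set_def by blast
  have VAB: "V = A \<union> B" using assms(2) unfolding two_separation_def by blast
  have KV: "K \<subseteq> V" using assms(3) unfolding connected_set_def by blast
  from path show "r \<in> B - A"
  proof induction
    case base then show ?case using assms(6) .
  next
    case (step y z)
    show ?case
    proof (rule ccontr)
      assume "z \<notin> B - A"
      then have "z \<in> A" using step KV VAB by blast
      then have "z \<in> A \<inter> B" using sep_step[OF assms(1,2)] step by blast
      then show False using step assms(4) by blast
    qed
  qed
qed


lemma forward_dir:
  fixes VH :: "'b set" and EH :: "'b \<Rightarrow> 'b \<Rightarrow> bool"
    and VG :: "'a set" and EG :: "'a \<Rightarrow> 'a \<Rightarrow> bool"
    and a b c u v :: 'a and X A B :: "'a set" and \<pi> :: "'a \<Rightarrow> 'b"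
  assumes gH: "graph VH EH" and kH: "k_connected 3 VH EH"
    and abc: "{a, b, c} \<subseteq> X" "distinct [a, b, c]"
    and pi: "inj_on \<pi> X" "\<pi> ` X \<subseteq> VH"
    and gG: "graph VG EG" and sep: "two_separation VG EG A B" and uv: "A \<inter> B = {u, v}"
    and XA: "X \<subseteq> A"
    and M: "H_model VH EH VG EG M" and roots: "\<forall>w\<in>X. w \<in> M (\<pi> w)"
  shows "rooted_minor_wrt VH EH X \<pi> A (side_graph EG A u v)"
proof -
  have VAB: "VG = A \<union> B" using sep unfolding two_separation_def by blast
  have conn: "\<And>x. x \<in> VH \<Longrightarrow> connected_set VG EG (M x)"
    and disj: "\<And>x y. x \<in> VH \<Longrightarrow> y \<in> VH \<Longrightarrow> x \<noteq> y \<Longrightarrow> M x \<inter> M y = {}"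
    and edg: "\<And>x y. x \<in> VH \<Longrightarrow> y \<in> VH \<Longrightarrow> EH x y \<Longrightarrow> \<exists>p\<in>M x. \<exists>q\<in>M y. EG p q"
    using M unfolding H_model_def by blast+
  have MV: "\<And>x. x \<in> VH \<Longrightarrow> M x \<subseteq> VG" using conn unfolding connected_set_def by blast
  have uvA: "u \<in> A" "v \<in> A" using uv by blast+
  have notT: "\<not> M x \<subseteq> B - A" if x0: "x \<in> VH" for x
  proof
    assume T: "M x \<subseteq> B - A"
    define S where "S = {y\<in>VH. u \<in> M y \<or> v \<in> M y}"
    obtain xu where xu: "\<forall>y\<in>VH. u \<in> M y \<longrightarrow> y = xu"
      using disj by blast
    obtain xv where xv: "\<forall>y\<in>VH. v \<in> M y \<longrightarrow> y = xv"
      using disj by blast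
    have Ssub: "S \<subseteq> {xu, xv}" using xu xv unfolding S_def by blast
    have "card S \<le> card {xu, xv}" using Ssub by (intro card_mono) auto
    also have "\<dots> \<le> 2" by (simp add: card_insert_if)
    finally have "card S < 3" by simp
    moreover have "S \<subseteq> VH" unfolding S_def by blast
    ultimately have cS: "connected_set VH EH (VH - S)" using kH unfolding k_connected_def by blast
    obtain w where w: "w \<in> {a, b, c}" "\<pi> w \<notin> {xu, xv}"
    proof -
      have "\<pi> a \<noteq> \<pi> b" "\<pi> a \<noteq> \<pi> c" "\<pi> b \<noteq> \<pi> c"
        using pi(1) abc unfolding inj_on_def by auto
      then show ?thesis using that by blast
    qed
    have wX: "w \<in> X" using w abc by blast
    have y0: "\<pi> w \<in> VH - S" using w Ssub pi(2) wX by blast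
    have x0S: "x \<in> VH - S" using T x0 uvA unfolding S_def by blast
    have path: "(\<lambda>p q. EH p q \<and> p \<in> VH - S \<and> q \<in> VH - S)\<^sup>*\<^sup>* x (\<pi> w)"
      using cS x0S y0 unfolding connected_set_def by blast
    have "M (\<pi> w) \<subseteq> B - A"
      using path
    proof induction
      case base then show ?case using T .
    next
      case (step y z)
      then have yz: "y \<in> VH" "z \<in> VH" "EH y z" "z \<notin> S" by auto
      obtain p q where pq: "p \<in> M y" "q \<in> M z" "EG p q" using edg yz by blast
      have pBA: "p \<in> B - A" using step.IH pq by blast
      have q1: "q \<notin> A \<inter> B" using yz(2,4) pq(2) uv unfolding S_def by auto
      have qBA: "q \<in> B - A"
      proof (rule ccontr)
        assume "q \<notin> B - A"
        then have "q \<in> A" using MV yz pq VAB by blast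
        then show False using sep_step[OF gG sep pBA pq(3)] q1 by blast
      qed
      have "M z \<inter> (A \<inter> B) = {}" using yz(2,4) uv unfolding S_def by auto
      then show ?case using stay_side[OF gG sep conn[OF yz(2)] _ pq(2) qBA] by blast
    qed
    moreover have "w \<in> M (\<pi> w)" "w \<in> A" using roots wX XA by blast+
    ultimately show False by blast
  qed
  have hasuv: "u \<in> M x \<or> v \<in> M x" if "x \<in> VH" "p \<in> M x" "p \<in> B - A" for x p
  proof (rule ccontr)
    assume "\<not> (u \<in> M x \<or> v \<in> M x)"
    then have "M x \<inter> (A \<inter> B) = {}" using uv by auto
    then show False using stay_side[OF gG sep conn[OF that(1)] _ that(2,3)] notT that(1) by blast
  qed
  define M' where "M' x = M x \<inter> A" for x
  let ?GA = "side_graph EG A u v"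
  have conn': "connected_set A ?GA (M' x)" if xV: "x \<in> VH" for x
  proof -
    have ne: "M' x \<noteq> {}" using notT[OF xV] MV[OF xV] VAB unfolding M'_def by blast
    let ?R' = "\<lambda>s t. ?GA s t \<and> s \<in> M' x \<and> t \<in> M' x"
    have "?R'\<^sup>*\<^sup>* p r" if pr: "p \<in> M' x" "r \<in> M' x" for p r
    proof -
      have path: "(\<lambda>s t. EG s t \<and> s \<in> M x \<and> t \<in> M x)\<^sup>*\<^sup>* p r"
        using conn[OF xV] pr unfolding connected_set_def M'_def by blast
      have "(r \<in> A \<and> ?R'\<^sup>*\<^sup>* p r) \<or> (r \<notin> A \<and> (\<exists>z\<in>{u,v}. z \<in> M x \<and> ?R'\<^sup>*\<^sup>* p z))"
        using path
      proof induction
        case base then show ?case using pr unfolding M'_def by simp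
      next
        case (step y y')
        have y'V: "y' \<in> A \<union> B" using step MV[OF xV] VAB by blast
        show ?case
        proof (cases "y \<in> A")
          case yA: True
          then have IH: "?R'\<^sup>*\<^sup>* p y" using step.IH by blast
          show ?thesis
          proof (cases "y' \<in> A")
            case True
            then have "?R' y y'" using yA step unfolding side_graph_def M'_def by auto
            then have "?R'\<^sup>*\<^sup>* p y'" by (rule rtranclp.rtrancl_into_rtrancl[OF IH])
            then show ?thesis using True by blast
          next
            case False
            then have y'BA: "y' \<in> B - A" using y'V by blast
            have "EG y' y" using graph_sym[OF gG] step by blast
            then have "y \<in> A \<inter> B" using sep_step[OF gG sep y'BA _ yA] by blast
            then show ?thesis using False IH uv step by blast
          qed
        next
          case yA: False
          then obtain z where z: "z \<in> {u,v}" "z \<in> M x" "?R'\<^sup>*\<^sup>* p z" using step.IH by blast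
          show ?thesis
          proof (cases "y' \<in> A")
            case False then show ?thesis using z by blast
          next
            case True
            have yBA: "y \<in> B - A" using yA step MV[OF xV] VAB by blast
            have y'uv: "y' \<in> {u, v}" using sep_step[OF gG sep yBA _ True] step uv by blast
            show ?thesis
            proof (cases "z = y'")
              case True then show ?thesis using z \<open>y' \<in> A\<close> by blast
            next
              case False
              then have "?R' z y'" using z y'uv step \<open>y' \<in> A\<close> uvA
                unfolding side_graph_def M'_def by auto
              then have "?R'\<^sup>*\<^sup>* p y'" using z(3) by (rule rtranclp.rtrancl_into_rtrancl[rotated])
              then show ?thesis using \<open>y' \<in> A\<close> by blast
            qed
          qed
        qed
      qed
      then show ?thesis using pr unfolding M'_def by blast
    qed
    then show ?thesis using ne unfolding connected_set_def M'_def by blast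
  qed
  have both: "(\<exists>z\<in>{u,v}. z \<in> M x) \<and> (\<exists>z\<in>{u,v}. z \<in> M y)"
    if "x \<in> VH" "y \<in> VH" "p \<in> M x" "q \<in> M y" "EG p q" "p \<notin> A" for x y p q
  proof -
    have pBA: "p \<in> B - A" using that MV VAB by blast
    have 1: "\<exists>z\<in>{u,v}. z \<in> M x" using hasuv[OF that(1,3) pBA] by blast
    have "q \<in> VG" using that MV by blast
    show ?thesis
    proof (cases "q \<in> A")
      case True
      then have "q \<in> {u,v}" using sep_step[OF gG sep pBA that(5)] uv by blast
      then show ?thesis using 1 that(4) by blast
    next
      case False
      then have "q \<in> B - A" using \<open>q \<in> VG\<close> VAB by blast
      then show ?thesis using 1 hasuv[OF that(2,4)] by blast
    qed
  qed
  have edg': "\<exists>p\<in>M' x. \<exists>q\<in>M' y. ?GA p q" if xy: "x \<in> VH" "y \<in> VH" "EH x y" for x y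
  proof -
    obtain p q where pq: "p \<in> M x" "q \<in> M y" "EG p q" using edg xy by blast
    have xney: "x \<noteq> y" using graph_in[OF gH xy(3)] by blast
    show ?thesis
    proof (cases "p \<in> A \<and> q \<in> A")
      case True then show ?thesis using pq unfolding M'_def side_graph_def by blast
    next
      case False
      have "(\<exists>z\<in>{u,v}. z \<in> M x) \<and> (\<exists>z\<in>{u,v}. z \<in> M y)"
      proof (cases "p \<in> A")
        case False then show ?thesis using both[OF xy(1,2) pq] by blast
      next
        case True
        then have "q \<notin> A" using \<open>\<not> (p \<in> A \<and> q \<in> A)\<close> by blast
        then show ?thesis using both[OF xy(2,1) pq(2,1) graph_sym[OF gG pq(3)]] by blast
      qed
      then obtain z1 z2 where z: "z1 \<in> {u,v}" "z1 \<in> M x" "z2 \<in> {u,v}" "z2 \<in> M y" by blast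
      have "z1 \<noteq> z2" using disj[OF xy(1,2) xney] z by blast
      then have "?GA z1 z2" using z unfolding side_graph_def by auto
      then show ?thesis using z uvA unfolding M'_def by blast
    qed
  qed
  have "H_model VH EH A ?GA M'"
    unfolding H_model_def using conn' edg' disj unfolding M'_def by blast
  moreover have "\<forall>w\<in>X. w \<in> M' (\<pi> w)" using roots XA unfolding M'_def by blast
  ultimately show ?thesis unfolding rooted_minor_wrt_def by blast
qed

lemma backward_dir:
  fixes VH :: "'b set" and EH :: "'b \<Rightarrow> 'b \<Rightarrow> bool"
    and VG :: "'a set" and EG :: "'a \<Rightarrow> 'a \<Rightarrow> bool"
    and u v :: 'a and X A B :: "'a set" and \<pi> :: "'a \<Rightarrow> 'b"
  assumes gG: "graph VG EG" and kG: "k_connected 2 VG EG"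
    and sep: "two_separation VG EG A B" and uv: "A \<inter> B = {u, v}"
    and M: "H_model VH EH A (side_graph EG A u v) M" and roots: "\<forall>w\<in>X. w \<in> M (\<pi> w)"
  shows "rooted_minor_wrt VH EH X \<pi> VG EG"
proof -
  have VAB: "VG = A \<union> B" using sep unfolding two_separation_def by blast
  let ?GA = "side_graph EG A u v"
  have conn: "\<And>x. x \<in> VH \<Longrightarrow> connected_set A ?GA (M x)"
    and disj: "\<And>x y. x \<in> VH \<Longrightarrow> y \<in> VH \<Longrightarrow> x \<noteq> y \<Longrightarrow> M x \<inter> M y = {}"
    and edg: "\<And>x y. x \<in> VH \<Longrightarrow> y \<in> VH \<Longrightarrow> EH x y \<Longrightarrow> \<exists>p\<in>M x. \<exists>q\<in>M y. ?GA p q"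
    using M unfolding H_model_def by blast+
  have MA: "\<And>x. x \<in> VH \<Longrightarrow> M x \<subseteq> A" using conn unfolding connected_set_def by blast
  have uvA: "u \<in> A" "v \<in> A" using uv by blast+
  obtain b0 where b0: "b0 \<in> B - A" using sep unfolding two_separation_def by blast
  obtain a0 where a0: "a0 \<in> A - B" using sep unfolding two_separation_def by blast
  let ?Rb = "\<lambda>s t. EG s t \<and> s \<in> B - A \<and> t \<in> B - A"
  define C where "C = {y. ?Rb\<^sup>*\<^sup>* b0 y}"
  have CBA: "C \<subseteq> B - A"
  proof
    fix y assume "y \<in> C"
    then have "?Rb\<^sup>*\<^sup>* b0 y" unfolding C_def by simp
    then show "y \<in> B - A"
    proof induction
      case base show ?case using b0 .
    next
      case (step y z) then show ?case by blast
    qed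
  qed
  let ?Rc = "\<lambda>s t. EG s t \<and> s \<in> C \<and> t \<in> C"
  have b0C: "b0 \<in> C" unfolding C_def by simp
  have toC: "?Rc\<^sup>*\<^sup>* b0 y" if "y \<in> C" for y
  proof -
    have "?Rb\<^sup>*\<^sup>* b0 y" using that unfolding C_def by simp
    then show ?thesis
    proof induction
      case base then show ?case by simp
    next
      case (step y z)
      have "?Rb\<^sup>*\<^sup>* b0 z" by (rule rtranclp.rtrancl_into_rtrancl[OF step(1) step(2)])
      then have "z \<in> C" unfolding C_def by simp
      moreover have "y \<in> C" using step unfolding C_def by simp
      ultimately have "?Rc y z" using step by blast
      then show ?case using step.IH by (rule rtranclp.rtrancl_into_rtrancl[rotated])
    qed
  qed
  have Cpath: "?Rc\<^sup>*\<^sup>* s t" if "s \<in> C" "t \<in> C" for s t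
  proof -
    have "?Rc\<^sup>*\<^sup>* s b0" using rtranclp_sym[OF toC[OF that(1)]] graph_sym[OF gG] by blast
    then show ?thesis using toC[OF that(2)] by (rule rtranclp_trans)
  qed
  have adj: "\<exists>p\<in>C. EG p w" if "A \<inter> B \<subseteq> {u', w}" "u' \<in> A \<inter> B" for u' w
  proof -
    have "card {u'} < 2" by simp
    moreover have "{u'} \<subseteq> VG" using that VAB by blast
    ultimately have "connected_set VG EG (VG - {u'})" using kG unfolding k_connected_def
      by blast
    moreover have "b0 \<in> VG - {u'}" "a0 \<in> VG - {u'}" using a0 b0 VAB that(2) by auto
    ultimately have path: "(\<lambda>p q. EG p q \<and> p \<in> VG - {u'} \<and> q \<in> VG - {u'})\<^sup>*\<^sup>* b0 a0"
      unfolding connected_set_def by blast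
    have "a0 \<in> C \<or> (\<exists>p\<in>C. EG p w)"
      using path
    proof induction
      case base then show ?case using b0C by simp
    next
      case (step y z)
      show ?case
      proof (cases "\<exists>p\<in>C. EG p w")
        case True then show ?thesis by blast
      next
        case False
        then have yC: "y \<in> C" using step.IH by blast
        then have yBA: "y \<in> B - A" using CBA by blast
        show ?thesis
        proof (cases "z \<in> A")
          case True
          then have "z \<in> A \<inter> B" using sep_step[OF gG sep yBA _ True] step by blast
          then have "z = w" using that(1) step by blast
          then show ?thesis using yC step by blast
        next
          case False
          then have "z \<in> B - A" using step VAB by blast
          then have "?Rb y z" using yBA step by blast
          moreover have "?Rb\<^sup>*\<^sup>* b0 y" using yC unfolding C_def by simp
          ultimately have "?Rb\<^sup>*\<^sup>* b0 z" by (simp add: rtranclp.rtrancl_into_rtrancl)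
          then have "z \<in> C" unfolding C_def by simp
          then show ?thesis by blast
        qed
      qed
    qed
    then show ?thesis using a0 CBA by blast
  qed
  obtain pu where pu: "pu \<in> C" "EG pu u" using adj[of v u] uv by auto
  obtain pv where pv: "pv \<in> C" "EG pv v" using adj[of u v] uv by auto
  have uEGpu: "EG u pu" using graph_sym[OF gG pu(2)] .
  have vEGpv: "EG v pv" using graph_sym[OF gG pv(2)] .
  have CV: "C \<subseteq> VG" using CBA VAB by blast
  define M' where "M' x = (if u \<in> M x then M x \<union> C else M x)" for x
  have conn': "connected_set VG EG (M' x)" if xV: "x \<in> VH" for x
  proof -
    let ?R1 = "\<lambda>s t. ?GA s t \<and> s \<in> M x \<and> t \<in> M x"
    let ?R2 = "\<lambda>s t. EG s t \<and> s \<in> M' x \<and> t \<in> M' x"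
    have KK: "M x \<subseteq> M' x" unfolding M'_def by auto
    have CK: "u \<in> M x \<Longrightarrow> C \<subseteq> M' x" unfolding M'_def by auto
    have Cmono: "?R2\<^sup>*\<^sup>* s t" if "u \<in> M x" "s \<in> C" "t \<in> C" for s t
      using rtranclp_lift[OF Cpath[OF that(2,3)], of ?R2] CK[OF that(1)] by blast
    have st: "?R2\<^sup>*\<^sup>* s t" if "?R1 s t" for s t
    proof (cases "EG s t \<and> s \<in> A \<and> t \<in> A")
      case True then show ?thesis using that KK by blast
    next
      case False
      then have uvst: "u \<noteq> v" "(s = u \<and> t = v) \<or> (s = v \<and> t = u)"
        using that unfolding side_graph_def by blast+
      have uK: "u \<in> M x" "v \<in> M x" using that uvst by auto
      have e1: "?R2 u pu" using uEGpu uK KK CK pu by blast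
      have e2: "?R2 pv v" using pv uK KK CK by blast
      have e3: "?R2 v pv" using vEGpv uK KK CK pv by blast
      have e4: "?R2 pu u" using pu uK KK CK by blast
      have "?R2\<^sup>*\<^sup>* u v"
        using converse_rtranclp_into_rtranclp[OF e1 rtranclp.rtrancl_into_rtrancl[OF Cmono[OF uK(1) pu(1) pv(1)] e2]] .
      moreover have "?R2\<^sup>*\<^sup>* v u"
        using converse_rtranclp_into_rtranclp[OF e3 rtranclp.rtrancl_into_rtrancl[OF Cmono[OF uK(1) pv(1) pu(1)] e4]] .
      ultimately show ?thesis using uvst by blast
    qed
    have KKp: "?R2\<^sup>*\<^sup>* s t" if "s \<in> M x" "t \<in> M x" for s t
      using rtranclp_lift[of ?R1 s t ?R2] st conn[OF xV] that unfolding connected_set_def by blast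
    have all: "?R2\<^sup>*\<^sup>* s t" if "s \<in> M' x" "t \<in> M' x" for s t
    proof (cases "u \<in> M x")
      case False then show ?thesis using that KKp unfolding M'_def by auto
    next
      case uK: True
      have e1: "?R2 u pu" using uEGpu uK KK CK pu by blast
      have e4: "?R2 pu u" using pu uK KK CK by blast
      have s1: "?R2\<^sup>*\<^sup>* s u" if "s \<in> M' x" for s
      proof (cases "s \<in> M x")
        case True then show ?thesis using KKp uK by blast
      next
        case False
        then have "s \<in> C" using that uK unfolding M'_def by auto
        then show ?thesis using rtranclp.rtrancl_into_rtrancl[OF Cmono[OF uK _ pu(1)] e4] by blast
      qed
      have s2: "?R2\<^sup>*\<^sup>* u t" if "t \<in> M' x" for t
      proof (cases "t \<in> M x")
        case True then show ?thesis using KKp uK by blast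
      next
        case False
        then have "t \<in> C" using that uK unfolding M'_def by auto
        then show ?thesis using converse_rtranclp_into_rtranclp[OF e1 Cmono[OF uK pu(1)]] by blast
      qed
      show ?thesis using rtranclp_trans[OF s1[OF that(1)] s2[OF that(2)]] .
    qed
    have "M' x \<noteq> {}" "M' x \<subseteq> VG"
      using conn[OF xV] KK CV VAB unfolding connected_set_def M'_def by auto
    then show ?thesis using all unfolding connected_set_def by blast
  qed
  have disj': "M' x \<inter> M' y = {}" if "x \<in> VH" "y \<in> VH" "x \<noteq> y" for x y
    using disj[OF that] MA[OF that(1)] MA[OF that(2)] CBA unfolding M'_def by auto
  have edg': "\<exists>p\<in>M' x. \<exists>q\<in>M' y. EG p q" if xy: "x \<in> VH" "y \<in> VH" "EH x y" for x y
  proof -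
    obtain p q where pq: "p \<in> M x" "q \<in> M y" "?GA p q" using edg xy by blast
    show ?thesis
    proof (cases "EG p q")
      case True then show ?thesis using pq unfolding M'_def by auto
    next
      case False
      then have "(p = u \<and> q = v) \<or> (p = v \<and> q = u)" using pq(3) unfolding side_graph_def by blast
      then show ?thesis
      proof
        assume "p = u \<and> q = v"
        then show ?thesis using pq pv unfolding M'_def by auto
      next
        assume "p = v \<and> q = u"
        then show ?thesis using pq pv vEGpv unfolding M'_def by auto
      qed
    qed
  qed
  have "H_model VH EH VG EG M'" unfolding H_model_def using conn' disj' edg' by blast
  moreover have "\<forall>w\<in>X. w \<in> M' (\<pi> w)" using roots unfolding M'_def by auto
  ultimately show ?thesis unfolding rooted_minor_wrt_def by blast
qed

theorem mainTheorem12: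
  fixes VH :: "'b set" and EH :: "'b \<Rightarrow> 'b \<Rightarrow> bool"
    and VG :: "'a set" and EG :: "'a \<Rightarrow> 'a \<Rightarrow> bool"
    and a b c d u v :: 'a and X A B :: "'a set" and F :: "('a \<Rightarrow> 'b) set"
  assumes "graph VH EH" and "k_connected 3 VH EH"
    and "X = {a, b, c, d}" and "distinct [a, b, c, d]"
    and "\<forall>\<pi>\<in>F. inj_on \<pi> X \<and> \<pi> ` X \<subseteq> VH"
    and "graph VG EG" and "k_connected 2 VG EG" and "X \<subseteq> VG"
    and "two_separation VG EG A B" and "A \<inter> B = {u, v}"
    and "X \<subseteq> A"
  shows "rooted_minor VH EH X F VG EG \<longleftrightarrow> rooted_minor VH EH X F A (side_graph EG A u v)"
proof
  assume "rooted_minor VH EH X F VG EG"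
  then obtain \<pi> M where pi: "\<pi> \<in> F" and M: "H_model VH EH VG EG M" "\<forall>w\<in>X. w \<in> M (\<pi> w)"
    unfolding rooted_minor_def rooted_minor_wrt_def by blast
  have abc: "{a, b, c} \<subseteq> X" "distinct [a, b, c]" using assms(3,4) by auto
  have pi2: "inj_on \<pi> X" "\<pi> ` X \<subseteq> VH" using assms(5) pi by auto
  have "rooted_minor_wrt VH EH X \<pi> A (side_graph EG A u v)"
    by (rule forward_dir[OF assms(1,2) abc pi2 assms(6,9,10,11) M])
  then show "rooted_minor VH EH X F A (side_graph EG A u v)"
    unfolding rooted_minor_def using pi by blast
next
  assume "rooted_minor VH EH X F A (side_graph EG A u v)"
  then obtain \<pi> M where pi: "\<pi> \<in> F" and M: "H_model VH EH A (side_graph EG A u v) M" "\<forall>w\<in>X. w \<in> M (\<pi> w)"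
    unfolding rooted_minor_def rooted_minor_wrt_def by blast
  have "rooted_minor_wrt VH EH X \<pi> VG EG" by (rule backward_dir[OF assms(6,7,9,10) M])
  then show "rooted_minor VH EH X F VG EG" unfolding rooted_minor_def using pi by blast
qed

end
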